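(* Every cartesian category $(\mathcal C,\times,1)$, viewed as a discard category with $\top_A:A\to 1$ the unique morphism to the terminal object, is pseudo-purifiable. Moreover, for every $f\in\mathcal C(A,B)$ the pairing $\langle f,\mathrm{id}_A\rangle\in\mathcal C(A,B\times A)$ is a pseudo-purification of $f$.
   Context: A discard category is a symmetric monoidal category with, for each object $A$, a morphism $\top_A:A\to I$ with $\top_I=\mathrm{id}_I$ and $\top_{A\otimes B}=\top_A\otimes\top_B$; $f:A\to B$ is causal if $\top_B\circ f=\top_A$. A morphism $p\in\mathcal C(A,B\otimes X)$ is a pseudo-purification of $f\in\mathcal C(A,B)$, written $p\in\mathrm{Pure}(f)$, if for every object $Y$ and every $g\in\mathcal C(A,B\otimes Y)$ with $f=(\mathrm{id}_B\otimes\top_Y)\circ g$ there is a causal $c\in\mathcal C(X,Y)$ with $g=(\mathrm{id}_B\otimes c)\circ p$. The category is pseudo-purifiable if every morphism has a pseudo-purification and, for all $f_1\in\mathcal C(A_1,B_1\otimes C)$, $f_2\in\mathcal C(C\otimes A_2,B_2)$, $p_1\in\mathrm{Pure}(f_1)$ with $p_1:A_1\to B_1\otimes C\otimes X_1$ and $p_2\in\mathrm{Pure}(f_2)$ with $p_2:C\otimes A_2\to B_2\otimes X_2$, the morphism $(\mathrm{id}_{B_1\otimes B_2}\otimes\sigma_{X_2,X_1})\circ(\mathrm{id}_{B_1}\otimes p_2\otimes\mathrm{id}_{X_1})\circ(\mathrm{id}_{B_1\otimes C}\otimes\sigma_{X_1,A_2})\circ(p_1\otimes\mathrm{id}_{A_2})$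 is a pseudo-purification of $(\mathrm{id}_{B_1}\otimes f_2)\circ(f_1\otimes\mathrm{id}_{A_2})$ (here $\sigma$ is the symmetry). *)

theory Defs
  imports Main
begin

record ('o, 'm) cart_cat =
  cat_ob   :: "'o set"
  cat_hom  :: "'o \<Rightarrow> 'o \<Rightarrow> 'm set"
  cat_comp :: "'m \<Rightarrow> 'm \<Rightarrow> 'm"   (* cat_comp g f = g \<circ> f *)
  cat_id   :: "'o \<Rightarrow> 'm"
  cat_prod :: "'o \<Rightarrow> 'o \<Rightarrow> 'o"
  cat_p1   :: "'o \<Rightarrow> 'o \<Rightarrow> 'm"
  cat_p2   :: "'o \<Rightarrow> 'o \<Rightarrow> 'm"
  cat_pair :: "'m \<Rightarrow> 'm \<Rightarrow> 'm"
  cat_one  :: "'o"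
  cat_bang :: "'o \<Rightarrow> 'm"

definition cartesian_category :: "('o, 'm, 'x) cart_cat_scheme \<Rightarrow> bool" where
  "cartesian_category K \<longleftrightarrow>
     (\<forall>A B. cat_hom K A B \<noteq> {} \<longrightarrow> A \<in> cat_ob K \<and> B \<in> cat_ob K) \<and>
     (\<forall>A B A' B' f. f \<in> cat_hom K A B \<and> f \<in> cat_hom K A' B' \<longrightarrow> A = A' \<and> B = B') \<and>
     (\<forall>A\<in>cat_ob K. cat_id K A \<in> cat_hom K A A) \<and>
     (\<forall>A B D f g. f \<in> cat_hom K A B \<and> g \<in> cat_hom K B D \<longrightarrow> cat_comp K g f \<in> cat_hom K A D) \<and>
     (\<forall>A B f. f \<in> cat_hom K A B \<longrightarrow> cat_comp K (cat_id K B) f = f \<and> cat_comp K f (cat_id K A) = f) \<and>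
     (\<forall>A B D E f g h. f \<in> cat_hom K A B \<and> g \<in> cat_hom K B D \<and> h \<in> cat_hom K D E \<longrightarrow>
        cat_comp K h (cat_comp K g f) = cat_comp K (cat_comp K h g) f) \<and>
     cat_one K \<in> cat_ob K \<and>
     (\<forall>A\<in>cat_ob K. cat_bang K A \<in> cat_hom K A (cat_one K)) \<and>
     (\<forall>A f. f \<in> cat_hom K A (cat_one K) \<longrightarrow> f = cat_bang K A) \<and>
     (\<forall>A\<in>cat_ob K. \<forall>B\<in>cat_ob K.
        cat_prod K A B \<in> cat_ob K \<and>
        cat_p1 K A B \<in> cat_hom K (cat_prod K A B) A \<and>
        cat_p2 K A B \<in> cat_hom K (cat_prod K A B) B \<and>
        (\<forall>D f g. f \<in> cat_hom K D A \<and> g \<in> cat_hom K D B \<longrightarrow>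
           cat_pair K f g \<in> cat_hom K D (cat_prod K A B) \<and>
           cat_comp K (cat_p1 K A B) (cat_pair K f g) = f \<and>
           cat_comp K (cat_p2 K A B) (cat_pair K f g) = g \<and>
           (\<forall>h. h \<in> cat_hom K D (cat_prod K A B) \<and>
                cat_comp K (cat_p1 K A B) h = f \<and> cat_comp K (cat_p2 K A B) h = g \<longrightarrow>
                h = cat_pair K f g)))"

definition tens :: "('o, 'm, 'x) cart_cat_scheme \<Rightarrow> 'o \<Rightarrow> 'o \<Rightarrow> 'm \<Rightarrow> 'm \<Rightarrow> 'm" where
  "tens K A B f g = cat_pair K (cat_comp K f (cat_p1 K A B)) (cat_comp K g (cat_p2 K A B))"

definition symm :: "('o, 'm, 'x) cart_cat_scheme \<Rightarrow> 'o \<Rightarrow> 'o \<Rightarrow> 'm" where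
  "symm K A B = cat_pair K (cat_p2 K A B) (cat_p1 K A B)"

definition assoc :: "('o, 'm, 'x) cart_cat_scheme \<Rightarrow> 'o \<Rightarrow> 'o \<Rightarrow> 'o \<Rightarrow> 'm" where
  "assoc K A B D =
     cat_pair K (cat_comp K (cat_p1 K A B) (cat_p1 K (cat_prod K A B) D))
       (cat_pair K (cat_comp K (cat_p2 K A B) (cat_p1 K (cat_prod K A B) D))
                   (cat_p2 K (cat_prod K A B) D))"

definition assoc_inv :: "('o, 'm, 'x) cart_cat_scheme \<Rightarrow> 'o \<Rightarrow> 'o \<Rightarrow> 'o \<Rightarrow> 'm" where
  "assoc_inv K A B D =
     cat_pair K
       (cat_pair K (cat_p1 K A (cat_prod K B D))
                   (cat_comp K (cat_p1 K B D) (cat_p2 K A (cat_prod K B D))))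
       (cat_comp K (cat_p2 K B D) (cat_p2 K A (cat_prod K B D)))"

definition runit :: "('o, 'm, 'x) cart_cat_scheme \<Rightarrow> 'o \<Rightarrow> 'm" where
  "runit K A = cat_p1 K A (cat_one K)"

definition discard :: "('o, 'm, 'x) cart_cat_scheme \<Rightarrow> 'o \<Rightarrow> 'm" where
  "discard K A = cat_bang K A"

definition causal :: "('o, 'm, 'x) cart_cat_scheme \<Rightarrow> 'o \<Rightarrow> 'o \<Rightarrow> 'm \<Rightarrow> bool" where
  "causal K X Y c \<longleftrightarrow> c \<in> cat_hom K X Y \<and> cat_comp K (discard K Y) c = discard K X"

text \<open>p : A \<rightarrow> B \<otimes> X is a pseudo-purification of f : A \<rightarrow> B.
  (Here (id_B \<otimes> \<top>_Y) \<circ> g lands in B \<otimes> 1, identified with B via the right unitor.)\<close>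
definition is_pure :: "('o, 'm, 'x) cart_cat_scheme \<Rightarrow> 'o \<Rightarrow> 'o \<Rightarrow> 'm \<Rightarrow> 'o \<Rightarrow> 'm \<Rightarrow> bool" where
  "is_pure K A B f X p \<longleftrightarrow>
     X \<in> cat_ob K \<and> p \<in> cat_hom K A (cat_prod K B X) \<and>
     (\<forall>Y\<in>cat_ob K. \<forall>g\<in>cat_hom K A (cat_prod K B Y).
        f = cat_comp K (runit K B) (cat_comp K (tens K B Y (cat_id K B) (discard K Y)) g) \<longrightarrow>
        (\<exists>c. causal K X Y c \<and> g = cat_comp K (tens K B X (cat_id K B) c) p))"

definition seq_comp :: "('o, 'm, 'x) cart_cat_scheme \<Rightarrow> 'o \<Rightarrow> 'o \<Rightarrow> 'o \<Rightarrow> 'o \<Rightarrow> 'm \<Rightarrow> 'm \<Rightarrow> 'm" where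
  "seq_comp K A1 B1 C A2 f1 f2 =
     cat_comp K (tens K B1 (cat_prod K C A2) (cat_id K B1) f2)
       (cat_comp K (assoc K B1 C A2) (tens K A1 A2 f1 (cat_id K A2)))"

text \<open>The corresponding composite of purifications p1 : A1 \<rightarrow> (B1 \<otimes> C) \<otimes> X1 and
  p2 : C \<otimes> A2 \<rightarrow> B2 \<otimes> X2, landing in (B1 \<otimes> B2) \<otimes> (X1 \<otimes> X2), with associators explicit.\<close>
definition seq_comp_pure ::
  "('o, 'm, 'x) cart_cat_scheme \<Rightarrow> 'o \<Rightarrow> 'o \<Rightarrow> 'o \<Rightarrow> 'o \<Rightarrow> 'o \<Rightarrow> 'o \<Rightarrow> 'o \<Rightarrow> 'm \<Rightarrow> 'm \<Rightarrow> 'm" where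
  "seq_comp_pure K A1 B1 C A2 B2 X1 X2 p1 p2 =
     (let P = cat_prod K; c = cat_comp K; i = cat_id K; BC = P B1 C;
          s1 = tens K A1 A2 p1 (i A2);
          s2 = assoc K BC X1 A2;
          s3 = tens K BC (P X1 A2) (i BC) (symm K X1 A2);
          s4 = assoc_inv K BC A2 X1;
          s5 = tens K (P BC A2) X1 (assoc K B1 C A2) (i X1);
          s6 = tens K (P B1 (P C A2)) X1 (tens K B1 (P C A2) (i B1) p2) (i X1);
          s7 = tens K (P B1 (P B2 X2)) X1 (assoc_inv K B1 B2 X2) (i X1);
          s8 = assoc K (P B1 B2) X2 X1;
          s9 = tens K (P B1 B2) (P X2 X1) (i (P B1 B2)) (symm K X2 X1)
      in c s9 (c s8 (c s7 (c s6 (c s5 (c s4 (c s3 (c s2 s1))))))))"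

definition pseudo_purifiable :: "('o, 'm, 'x) cart_cat_scheme \<Rightarrow> bool" where
  "pseudo_purifiable K \<longleftrightarrow>
     (\<forall>A\<in>cat_ob K. \<forall>B\<in>cat_ob K. \<forall>f\<in>cat_hom K A B. \<exists>X p. is_pure K A B f X p) \<and>
     (\<forall>A1 B1 C A2 B2 X1 X2 f1 f2 p1 p2.
        A1 \<in> cat_ob K \<and> B1 \<in> cat_ob K \<and> C \<in> cat_ob K \<and> A2 \<in> cat_ob K \<and> B2 \<in> cat_ob K \<and>
        f1 \<in> cat_hom K A1 (cat_prod K B1 C) \<and> f2 \<in> cat_hom K (cat_prod K C A2) B2 \<and>
        is_pure K A1 (cat_prod K B1 C) f1 X1 p1 \<and> is_pure K (cat_prod K C A2) B2 f2 X2 p2 \<longrightarrow>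
        is_pure K (cat_prod K A1 A2) (cat_prod K B1 B2) (seq_comp K A1 B1 C A2 f1 f2)
          (cat_prod K X1 X2) (seq_comp_pure K A1 B1 C A2 B2 X1 X2 p1 p2))"

end

theory Submission
  imports Defs
begin

locale cc =
  fixes K :: "('o,'m,'x) cart_cat_scheme"
  assumes cart: "cartesian_category K"
begin

definition arr where "arr f \<longleftrightarrow> (\<exists>A B. f \<in> cat_hom K A B)"
definition dom where "dom f = (THE A. \<exists>B. f \<in> cat_hom K A B)"
definition cod where "cod f = (THE B. \<exists>A. f \<in> cat_hom K A B)"

lemma cc1: "\<forall>A B. cat_hom K A B \<noteq> {} \<longrightarrow> A \<in> cat_ob K \<and> B \<in> cat_ob K"
  using cart unfolding cartesian_category_def by (elim conjE)
lemma cc2: "\<forall>A B A' B' f. f \<in> cat_hom K A B \<and> f \<in> cat_hom K A' B' \<longrightarrow> A = A' \<and> B = B'"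
  using cart unfolding cartesian_category_def by (elim conjE)
lemma cc3: "\<forall>A\<in>cat_ob K. cat_id K A \<in> cat_hom K A A"
  using cart unfolding cartesian_category_def by (elim conjE)
lemma cc4: "\<forall>A B D f g. f \<in> cat_hom K A B \<and> g \<in> cat_hom K B D \<longrightarrow> cat_comp K g f \<in> cat_hom K A D"
  using cart unfolding cartesian_category_def by (elim conjE)
lemma cc5: "\<forall>A B f. f \<in> cat_hom K A B \<longrightarrow> cat_comp K (cat_id K B) f = f \<and> cat_comp K f (cat_id K A) = f"
  using cart unfolding cartesian_category_def by (elim conjE)
lemma cc6: "\<forall>A B D E f g h. f \<in> cat_hom K A B \<and> g \<in> cat_hom K B D \<and> h \<in> cat_hom K D E \<longrightarrow>
        cat_comp K h (cat_comp K g f) = cat_comp K (cat_comp K h g) f"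
  using cart unfolding cartesian_category_def by (elim conjE)
lemma cc7: "cat_one K \<in> cat_ob K"
  using cart unfolding cartesian_category_def by (elim conjE)
lemma cc8: "\<forall>A\<in>cat_ob K. cat_bang K A \<in> cat_hom K A (cat_one K)"
  using cart unfolding cartesian_category_def by (elim conjE)
lemma cc9: "\<forall>A f. f \<in> cat_hom K A (cat_one K) \<longrightarrow> f = cat_bang K A"
  using cart unfolding cartesian_category_def by (elim conjE)
lemma cc10: "\<forall>A\<in>cat_ob K. \<forall>B\<in>cat_ob K.
        cat_prod K A B \<in> cat_ob K \<and>
        cat_p1 K A B \<in> cat_hom K (cat_prod K A B) A \<and>
        cat_p2 K A B \<in> cat_hom K (cat_prod K A B) B \<and>
        (\<forall>D f g. f \<in> cat_hom K D A \<and> g \<in> cat_hom K D B \<longrightarrow>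
           cat_pair K f g \<in> cat_hom K D (cat_prod K A B) \<and>
           cat_comp K (cat_p1 K A B) (cat_pair K f g) = f \<and>
           cat_comp K (cat_p2 K A B) (cat_pair K f g) = g \<and>
           (\<forall>h. h \<in> cat_hom K D (cat_prod K A B) \<and>
                cat_comp K (cat_p1 K A B) h = f \<and> cat_comp K (cat_p2 K A B) h = g \<longrightarrow>
                h = cat_pair K f g))"
  using cart unfolding cartesian_category_def by (elim conjE)

lemma hom_ob: "f \<in> cat_hom K A B \<Longrightarrow> A \<in> cat_ob K \<and> B \<in> cat_ob K"
  using cc1 by blast
lemma hom_uniq: "f \<in> cat_hom K A B \<Longrightarrow> f \<in> cat_hom K A' B' \<Longrightarrow> A = A' \<and> B = B'"
  using cc2 by blast
lemma id_hom: "A \<in> cat_ob K \<Longrightarrow> cat_id K A \<in> cat_hom K A A"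
  using cc3 by blast
lemma comp_hom: "f \<in> cat_hom K A B \<Longrightarrow> g \<in> cat_hom K B D \<Longrightarrow> cat_comp K g f \<in> cat_hom K A D"
  using cc4 by blast
lemma id_l_raw: "f \<in> cat_hom K A B \<Longrightarrow> cat_comp K (cat_id K B) f = f"
  using cc5 by blast
lemma id_r_raw: "f \<in> cat_hom K A B \<Longrightarrow> cat_comp K f (cat_id K A) = f"
  using cc5 by blast
lemma assoc_raw: "f \<in> cat_hom K A B \<Longrightarrow> g \<in> cat_hom K B D \<Longrightarrow> h \<in> cat_hom K D E \<Longrightarrow>
        cat_comp K (cat_comp K h g) f = cat_comp K h (cat_comp K g f)"
  using cc6 by metis
lemma one_ob: "cat_one K \<in> cat_ob K"
  using cc7 by blast
lemma bang_hom: "A \<in> cat_ob K \<Longrightarrow> cat_bang K A \<in> cat_hom K A (cat_one K)"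
  using cc8 by blast
lemma bang_uniq: "f \<in> cat_hom K A (cat_one K) \<Longrightarrow> f = cat_bang K A"
  using cc9 by blast
lemma prod_raw:
  assumes "A \<in> cat_ob K" "B \<in> cat_ob K"
  shows "cat_prod K A B \<in> cat_ob K \<and>
        cat_p1 K A B \<in> cat_hom K (cat_prod K A B) A \<and>
        cat_p2 K A B \<in> cat_hom K (cat_prod K A B) B \<and>
        (\<forall>D f g. f \<in> cat_hom K D A \<and> g \<in> cat_hom K D B \<longrightarrow>
           cat_pair K f g \<in> cat_hom K D (cat_prod K A B) \<and>
           cat_comp K (cat_p1 K A B) (cat_pair K f g) = f \<and>
           cat_comp K (cat_p2 K A B) (cat_pair K f g) = g \<and>
           (\<forall>h. h \<in> cat_hom K D (cat_prod K A B) \<and>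
                cat_comp K (cat_p1 K A B) h = f \<and> cat_comp K (cat_p2 K A B) h = g \<longrightarrow>
                h = cat_pair K f g))"
  using cc10 assms by blast

lemma arrI: assumes h: "f \<in> cat_hom K A B" shows "arr f \<and> dom f = A \<and> cod f = B"
proof (intro conjI)
  show "arr f" using h unfolding arr_def by blast
  show "dom f = A" unfolding dom_def
  proof (rule the_equality)
    show "\<exists>B. f \<in> cat_hom K A B" using h by blast
    fix A' assume "\<exists>B. f \<in> cat_hom K A' B" then show "A' = A" using h hom_uniq by blast
  qed
  show "cod f = B" unfolding cod_def
  proof (rule the_equality)
    show "\<exists>A. f \<in> cat_hom K A B" using h by blast
    fix B' assume "\<exists>A. f \<in> cat_hom K A B'" then show "B' = B" using h hom_uniq by blast
  qed
qed

lemma arr_hom: "arr f \<Longrightarrow> f \<in> cat_hom K (dom f) (cod f)"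
  using arrI arr_def by metis

lemma homI: "arr f \<Longrightarrow> dom f = A \<Longrightarrow> cod f = B \<Longrightarrow> f \<in> cat_hom K A B"
  using arr_hom by blast

lemma arr_ob: "arr f \<Longrightarrow> dom f \<in> cat_ob K" "arr f \<Longrightarrow> cod f \<in> cat_ob K"
  using arr_hom hom_ob by blast+

lemma id_c: "A \<in> cat_ob K \<Longrightarrow> arr (cat_id K A)"
  "A \<in> cat_ob K \<Longrightarrow> dom (cat_id K A) = A"
  "A \<in> cat_ob K \<Longrightarrow> cod (cat_id K A) = A"
  using arrI id_hom by blast+

lemma comp_c: "arr f \<Longrightarrow> arr g \<Longrightarrow> dom g = cod f \<Longrightarrow> arr (cat_comp K g f)"
  "arr f \<Longrightarrow> arr g \<Longrightarrow> dom g = cod f \<Longrightarrow> dom (cat_comp K g f) = dom f"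
  "arr f \<Longrightarrow> arr g \<Longrightarrow> dom g = cod f \<Longrightarrow> cod (cat_comp K g f) = cod g"
  using arrI arr_hom comp_hom by metis+

lemma prod_c: "A \<in> cat_ob K \<Longrightarrow> B \<in> cat_ob K \<Longrightarrow> cat_prod K A B \<in> cat_ob K"
  "A \<in> cat_ob K \<Longrightarrow> B \<in> cat_ob K \<Longrightarrow> arr (cat_p1 K A B)"
  "A \<in> cat_ob K \<Longrightarrow> B \<in> cat_ob K \<Longrightarrow> dom (cat_p1 K A B) = cat_prod K A B"
  "A \<in> cat_ob K \<Longrightarrow> B \<in> cat_ob K \<Longrightarrow> cod (cat_p1 K A B) = A"
  "A \<in> cat_ob K \<Longrightarrow> B \<in> cat_ob K \<Longrightarrow> arr (cat_p2 K A B)"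
  "A \<in> cat_ob K \<Longrightarrow> B \<in> cat_ob K \<Longrightarrow> dom (cat_p2 K A B) = cat_prod K A B"
  "A \<in> cat_ob K \<Longrightarrow> B \<in> cat_ob K \<Longrightarrow> cod (cat_p2 K A B) = B"
  using prod_raw arrI by blast+

lemma pair_hom: "arr f \<Longrightarrow> arr g \<Longrightarrow> dom f = dom g \<Longrightarrow>
   cat_pair K f g \<in> cat_hom K (dom f) (cat_prod K (cod f) (cod g))"
  using prod_raw arr_hom arr_ob by metis

lemma pair_c: "arr f \<Longrightarrow> arr g \<Longrightarrow> dom f = dom g \<Longrightarrow> arr (cat_pair K f g)"
  "arr f \<Longrightarrow> arr g \<Longrightarrow> dom f = dom g \<Longrightarrow> dom (cat_pair K f g) = dom f"
  "arr f \<Longrightarrow> arr g \<Longrightarrow> dom f = dom g \<Longrightarrow> cod (cat_pair K f g) = cat_prod K (cod f) (cod g)"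
  using pair_hom arrI by blast+

lemma bang_c: "cat_one K \<in> cat_ob K"
  "A \<in> cat_ob K \<Longrightarrow> arr (cat_bang K A)"
  "A \<in> cat_ob K \<Longrightarrow> dom (cat_bang K A) = A"
  "A \<in> cat_ob K \<Longrightarrow> cod (cat_bang K A) = cat_one K"
  using one_ob bang_hom arrI by blast+

lemma comp_assoc: "arr f \<Longrightarrow> arr g \<Longrightarrow> arr h \<Longrightarrow> dom g = cod f \<Longrightarrow> dom h = cod g \<Longrightarrow>
  cat_comp K (cat_comp K h g) f = cat_comp K h (cat_comp K g f)"
  using assoc_raw arr_hom by metis

lemma id_left: "arr f \<Longrightarrow> cod f = B \<Longrightarrow> cat_comp K (cat_id K B) f = f"
  using id_l_raw arr_hom by metis
lemma id_right: "arr f \<Longrightarrow> dom f = A \<Longrightarrow> cat_comp K f (cat_id K A) = f"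
  using id_r_raw arr_hom by metis

lemma p1_pair: "arr f \<Longrightarrow> arr g \<Longrightarrow> dom f = dom g \<Longrightarrow> cod f = A \<Longrightarrow> cod g = B \<Longrightarrow>
   cat_comp K (cat_p1 K A B) (cat_pair K f g) = f"
  using prod_raw arr_hom arr_ob by metis
lemma p2_pair: "arr f \<Longrightarrow> arr g \<Longrightarrow> dom f = dom g \<Longrightarrow> cod f = A \<Longrightarrow> cod g = B \<Longrightarrow>
   cat_comp K (cat_p2 K A B) (cat_pair K f g) = g"
  using prod_raw arr_hom arr_ob by metis

lemma prod_eq:
  assumes "arr h" "arr h'" "dom h = dom h'" "cod h = cat_prod K A B" "cod h' = cat_prod K A B"
    "A \<in> cat_ob K" "B \<in> cat_ob K"
    "cat_comp K (cat_p1 K A B) h = cat_comp K (cat_p1 K A B) h'"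
    "cat_comp K (cat_p2 K A B) h = cat_comp K (cat_p2 K A B) h'"
  shows "h = h'"
proof -
  have a: "cat_comp K (cat_p1 K A B) h \<in> cat_hom K (dom h) A"
    using assms prod_raw comp_hom arr_hom by metis
  have b: "cat_comp K (cat_p2 K A B) h \<in> cat_hom K (dom h) B"
    using assms prod_raw comp_hom arr_hom by metis
  have "h = cat_pair K (cat_comp K (cat_p1 K A B) h) (cat_comp K (cat_p2 K A B) h)"
    using prod_raw[OF assms(6,7)] a b assms arr_hom by metis
  moreover have "h' = cat_pair K (cat_comp K (cat_p1 K A B) h) (cat_comp K (cat_p2 K A B) h)"
    using prod_raw[OF assms(6,7)] a b assms arr_hom by metis
  ultimately show ?thesis by simp
qed

lemma pair_comp: "arr f \<Longrightarrow> arr g \<Longrightarrow> arr h \<Longrightarrow> dom f = dom g \<Longrightarrow> cod h = dom f \<Longrightarrow>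
  cat_comp K (cat_pair K f g) h = cat_pair K (cat_comp K f h) (cat_comp K g h)"
proof (rule prod_eq[where A="cod f" and B="cod g"])
  assume a: "arr f" "arr g" "arr h" "dom f = dom g" "cod h = dom f"
  have "cat_comp K (cat_p1 K (cod f) (cod g)) (cat_comp K (cat_pair K f g) h)
      = cat_comp K (cat_comp K (cat_p1 K (cod f) (cod g)) (cat_pair K f g)) h"
    using a by (simp add: comp_c pair_c arr_ob prod_c comp_assoc)
  also have "... = cat_comp K f h" using a by (simp add: p1_pair)
  finally show "cat_comp K (cat_p1 K (cod f) (cod g)) (cat_comp K (cat_pair K f g) h) =
    cat_comp K (cat_p1 K (cod f) (cod g)) (cat_pair K (cat_comp K f h) (cat_comp K g h))"
    using a by (simp add: comp_c p1_pair)
  have "cat_comp K (cat_p2 K (cod f) (cod g)) (cat_comp K (cat_pair K f g) h)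
      = cat_comp K (cat_comp K (cat_p2 K (cod f) (cod g)) (cat_pair K f g)) h"
    using a by (simp add: comp_c pair_c arr_ob prod_c comp_assoc)
  also have "... = cat_comp K g h" using a by (simp add: p2_pair)
  finally show "cat_comp K (cat_p2 K (cod f) (cod g)) (cat_comp K (cat_pair K f g) h) =
    cat_comp K (cat_p2 K (cod f) (cod g)) (cat_pair K (cat_comp K f h) (cat_comp K g h))"
    using a by (simp add: comp_c p2_pair)
qed (simp_all add: comp_c pair_c arr_ob prod_c)

lemma surj_pair: "arr g \<Longrightarrow> cod g = cat_prod K A B \<Longrightarrow> A \<in> cat_ob K \<Longrightarrow> B \<in> cat_ob K \<Longrightarrow>
  cat_pair K (cat_comp K (cat_p1 K A B) g) (cat_comp K (cat_p2 K A B) g) = g"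
  apply (rule sym, rule prod_eq[where A=A and B=B])
  by (simp_all add: comp_c pair_c prod_c p1_pair p2_pair)

lemma pair_proj: "A \<in> cat_ob K \<Longrightarrow> B \<in> cat_ob K \<Longrightarrow>
   cat_pair K (cat_p1 K A B) (cat_p2 K A B) = cat_id K (cat_prod K A B)"
  using surj_pair[of "cat_id K (cat_prod K A B)" A B] by (simp add: id_c prod_c id_right)

lemma bang_comp: "arr f \<Longrightarrow> cod f = A \<Longrightarrow> cat_comp K (cat_bang K A) f = cat_bang K (dom f)"
  by (metis arr_hom arr_ob(2) bang_hom bang_uniq comp_hom)

lemmas cs = id_c comp_c prod_c pair_c bang_c comp_assoc id_left id_right p1_pair p2_pair
  pair_comp surj_pair pair_proj bang_comp arr_ob


lemma hom_arr: "f \<in> cat_hom K A B \<Longrightarrow> arr f" "f \<in> cat_hom K A B \<Longrightarrow> dom f = A"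
  "f \<in> cat_hom K A B \<Longrightarrow> cod f = B"
  using arrI by blast+

lemma pair_pure:
  assumes A: "A \<in> cat_ob K" and B: "B \<in> cat_ob K" and f: "f \<in> cat_hom K A B"
  shows "is_pure K A B f A (cat_pair K f (cat_id K A))"
  unfolding is_pure_def
proof (intro conjI ballI impI)
  note fa = hom_arr[OF f]
  show "A \<in> cat_ob K" by (rule A)
  show "cat_pair K f (cat_id K A) \<in> cat_hom K A (cat_prod K B A)"
    by (rule homI) (simp_all add: cs fa A)
  fix Y g assume Y: "Y \<in> cat_ob K" and g: "g \<in> cat_hom K A (cat_prod K B Y)"
    and H: "f = cat_comp K (runit K B) (cat_comp K (tens K B Y (cat_id K B) (discard K Y)) g)"
  note ga = hom_arr[OF g]
  have H': "f = cat_comp K (cat_p1 K B Y) g"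
    using H by (simp add: cs ga A B Y runit_def tens_def discard_def)
  show "\<exists>c. causal K A Y c \<and> g = cat_comp K (tens K B A (cat_id K B) c) (cat_pair K f (cat_id K A))"
  proof (intro exI conjI)
    show "causal K A Y (cat_comp K (cat_p2 K B Y) g)"
      unfolding causal_def discard_def
      by (intro conjI homI) (simp_all add: cs ga A B Y)
    show "g = cat_comp K (tens K B A (cat_id K B) (cat_comp K (cat_p2 K B Y) g)) (cat_pair K f (cat_id K A))"
      unfolding tens_def H' by (simp add: cs ga A B Y)
  qed
qed

lemma pure_split:
  assumes A: "A \<in> cat_ob K" and B: "B \<in> cat_ob K" and f: "f \<in> cat_hom K A B"
    and p: "is_pure K A B f X q"
  shows "\<exists>c. c \<in> cat_hom K X A \<and> X \<in> cat_ob K \<and> q \<in> cat_hom K A (cat_prod K B X) \<and>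
     cat_comp K (cat_p1 K B X) q = f \<and> cat_comp K c (cat_comp K (cat_p2 K B X) q) = cat_id K A"
proof -
  note fa = hom_arr[OF f]
  have X: "X \<in> cat_ob K" and q: "q \<in> cat_hom K A (cat_prod K B X)" using p unfolding is_pure_def by auto
  note qa = hom_arr[OF q]
  have "cat_pair K f (cat_id K A) \<in> cat_hom K A (cat_prod K B A)"
    by (rule homI) (simp_all add: cs fa A)
  moreover have "f = cat_comp K (runit K B) (cat_comp K (tens K B A (cat_id K B) (discard K A)) (cat_pair K f (cat_id K A)))"
    by (simp add: cs fa A B runit_def tens_def discard_def)
  ultimately obtain c where c: "causal K X A c" and
    E: "cat_pair K f (cat_id K A) = cat_comp K (tens K B X (cat_id K B) c) q"
    using p A unfolding is_pure_def by blast
  have ch: "c \<in> cat_hom K X A" using c unfolding causal_def by blast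
  note ca = hom_arr[OF ch]
  have E1: "cat_comp K (cat_p1 K B A) (cat_pair K f (cat_id K A)) = cat_comp K (cat_p1 K B A) (cat_comp K (tens K B X (cat_id K B) c) q)"
    using E by simp
  have E2: "cat_comp K (cat_p2 K B A) (cat_pair K f (cat_id K A)) = cat_comp K (cat_p2 K B A) (cat_comp K (tens K B X (cat_id K B) c) q)"
    using E by simp
  show ?thesis
    apply (rule exI[of _ c])
    using E1 E2 ch X q by (simp add: cs fa qa ca A B X tens_def)
qed

lemma chain: "cat_comp K a b = e \<Longrightarrow> arr a \<Longrightarrow> arr b \<Longrightarrow> arr h \<Longrightarrow> dom a = cod b \<Longrightarrow> dom b = cod h \<Longrightarrow>
   cat_comp K a (cat_comp K b h) = cat_comp K e h"
  using comp_assoc by metis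

lemma chain2: "cat_comp K a (cat_comp K b d) = e \<Longrightarrow> arr a \<Longrightarrow> arr b \<Longrightarrow> arr d \<Longrightarrow> arr h \<Longrightarrow>
   dom a = cod b \<Longrightarrow> dom b = cod d \<Longrightarrow> dom d = cod h \<Longrightarrow>
   cat_comp K a (cat_comp K b (cat_comp K d h)) = cat_comp K e h"
  using comp_assoc comp_c by metis

lemma seq_pure:
  assumes A1: "A1 \<in> cat_ob K" and B1: "B1 \<in> cat_ob K" and C: "C \<in> cat_ob K"
    and A2: "A2 \<in> cat_ob K" and B2: "B2 \<in> cat_ob K"
    and f1: "f1 \<in> cat_hom K A1 (cat_prod K B1 C)" and f2: "f2 \<in> cat_hom K (cat_prod K C A2) B2"
    and p1: "is_pure K A1 (cat_prod K B1 C) f1 X1 q1" and p2: "is_pure K (cat_prod K C A2) B2 f2 X2 q2"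
  shows "is_pure K (cat_prod K A1 A2) (cat_prod K B1 B2) (seq_comp K A1 B1 C A2 f1 f2)
          (cat_prod K X1 X2) (seq_comp_pure K A1 B1 C A2 B2 X1 X2 q1 q2)"
proof -
  obtain c1 where c1: "c1 \<in> cat_hom K X1 A1" and X1: "X1 \<in> cat_ob K"
    and q1: "q1 \<in> cat_hom K A1 (cat_prod K (cat_prod K B1 C) X1)"
    and F1: "cat_comp K (cat_p1 K (cat_prod K B1 C) X1) q1 = f1"
    and G1: "cat_comp K c1 (cat_comp K (cat_p2 K (cat_prod K B1 C) X1) q1) = cat_id K A1"
    using pure_split[OF A1 prod_c(1)[OF B1 C] f1 p1] by blast
  obtain c2 where c2: "c2 \<in> cat_hom K X2 (cat_prod K C A2)" and X2: "X2 \<in> cat_ob K"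
    and q2: "q2 \<in> cat_hom K (cat_prod K C A2) (cat_prod K B2 X2)"
    and F2: "cat_comp K (cat_p1 K B2 X2) q2 = f2"
    and G2: "cat_comp K c2 (cat_comp K (cat_p2 K B2 X2) q2) = cat_id K (cat_prod K C A2)"
    using pure_split[OF prod_c(1)[OF C A2] B2 f2 p2] by blast
  note ha = hom_arr[OF f1] hom_arr[OF f2] hom_arr[OF c1] hom_arr[OF c2] hom_arr[OF q1] hom_arr[OF q2]
  note obs = A1 B1 C A2 B2 X1 X2
  have F1': "\<And>h. arr h \<Longrightarrow> cod h = A1 \<Longrightarrow> cat_comp K (cat_p1 K (cat_prod K B1 C) X1) (cat_comp K q1 h) = cat_comp K f1 h"
    by (rule chain[OF F1]) (simp_all add: cs ha obs)
  have F2': "\<And>h. arr h \<Longrightarrow> cod h = cat_prod K C A2 \<Longrightarrow> cat_comp K (cat_p1 K B2 X2) (cat_comp K q2 h) = cat_comp K f2 h"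
    by (rule chain[OF F2]) (simp_all add: cs ha obs)
  have G1': "\<And>h. arr h \<Longrightarrow> cod h = A1 \<Longrightarrow> cat_comp K c1 (cat_comp K (cat_p2 K (cat_prod K B1 C) X1) (cat_comp K q1 h)) = h"
    by (subst chain2[OF G1]) (simp_all add: cs ha obs)
  have G2': "\<And>h. arr h \<Longrightarrow> cod h = cat_prod K C A2 \<Longrightarrow> cat_comp K c2 (cat_comp K (cat_p2 K B2 X2) (cat_comp K q2 h)) = h"
    by (subst chain2[OF G2]) (simp_all add: cs ha obs)
  note R = F1 F2 F1' F2' G1' G2'
  show ?thesis
    unfolding is_pure_def
  proof (intro conjI ballI impI)
    show "cat_prod K X1 X2 \<in> cat_ob K" by (simp add: cs obs)
    show "seq_comp_pure K A1 B1 C A2 B2 X1 X2 q1 q2 \<in> cat_hom K (cat_prod K A1 A2) (cat_prod K (cat_prod K B1 B2) (cat_prod K X1 X2))"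
      unfolding seq_comp_pure_def Let_def tens_def assoc_def assoc_inv_def symm_def
      by (rule homI) (simp_all add: cs ha obs R)
    fix Y g assume Y: "Y \<in> cat_ob K" and g: "g \<in> cat_hom K (cat_prod K A1 A2) (cat_prod K (cat_prod K B1 B2) Y)"
      and H: "seq_comp K A1 B1 C A2 f1 f2 = cat_comp K (runit K (cat_prod K B1 B2))
               (cat_comp K (tens K (cat_prod K B1 B2) Y (cat_id K (cat_prod K B1 B2)) (discard K Y)) g)"
    note ga = hom_arr[OF g]
    have H': "cat_comp K (cat_p1 K (cat_prod K B1 B2) Y) g = seq_comp K A1 B1 C A2 f1 f2"
      using H by (simp add: cs ga ha obs Y runit_def tens_def discard_def)
    define c where "c = cat_comp K (cat_p2 K (cat_prod K B1 B2) Y) (cat_comp K g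
        (cat_pair K (cat_comp K c1 (cat_p1 K X1 X2)) (cat_comp K (cat_p2 K C A2) (cat_comp K c2 (cat_p2 K X1 X2)))))"
    show "\<exists>c. causal K (cat_prod K X1 X2) Y c \<and> g = cat_comp K (tens K (cat_prod K B1 B2) (cat_prod K X1 X2)
               (cat_id K (cat_prod K B1 B2)) c) (seq_comp_pure K A1 B1 C A2 B2 X1 X2 q1 q2)"
    proof (intro exI conjI)
      show "causal K (cat_prod K X1 X2) Y c"
        unfolding causal_def discard_def c_def
        by (intro conjI homI) (simp_all add: cs ga ha obs Y)
      show "g = cat_comp K (tens K (cat_prod K B1 B2) (cat_prod K X1 X2) (cat_id K (cat_prod K B1 B2)) c) (seq_comp_pure K A1 B1 C A2 B2 X1 X2 q1 q2)"
        apply (rule prod_eq[where A="cat_prod K B1 B2" and B=Y])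
        unfolding c_def seq_comp_pure_def Let_def tens_def assoc_def assoc_inv_def symm_def H' seq_comp_def
        by (simp_all add: cs ga ha obs Y R)
    qed
  qed
qed
end

theorem lemma7:
  assumes "cartesian_category K"
  shows "pseudo_purifiable K \<and>
         (\<forall>A\<in>cat_ob K. \<forall>B\<in>cat_ob K. \<forall>f\<in>cat_hom K A B.
            is_pure K A B f A (cat_pair K f (cat_id K A)))"
proof -
  interpret cc K by (rule cc.intro, rule assms)
  show ?thesis unfolding pseudo_purifiable_def
    using pair_pure seq_pure by blast
qed

end
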